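(* Given a positive integer $n$, there exists a constant $\delta_n>0$ depending only on $n$ such that for any integer $d\ge2$, any $0\ne a\in\mathbb{Z}/d\mathbb{Z}$, and any subgroup $H\subset G=(\mathbb{Z}/d\mathbb{Z})^\times$ of index $\le n$, $$\frac{1}{|H|}\sum_{t\in H}\left\langle\frac{ta}{d}\right\rangle>\delta_n.$$
   Context: For a real number $x$, $\langle x\rangle$ denotes its fractional part: $0\le\langle x\rangle<1$ and $x-\langle x\rangle\in\mathbb{Z}$. For $ta\in\mathbb{Z}/d\mathbb{Z}$, $\langle ta/d\rangle$ is computed using any integer representative. *)

theory Defs
  imports Complex_Main "HOL-Number_Theory.Residues"
begin

text \<open>The unit group (Z/dZ)^x, with Z/dZ realised as the residue ring on {0..d-1}.\<close>
definition unit_group_mod :: "int \<Rightarrow> int monoid" where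
  "unit_group_mod d = units_of (residue_ring d)"

end

theory Submission
  imports Defs "HOL-Computational_Algebra.Primes"
begin

definition RR :: "nat \<Rightarrow> nat" where
  "RR M = M^2 * fact (M+1) * (2*M+2) - 1"


fun Es :: "int \<Rightarrow> int set \<Rightarrow> nat \<Rightarrow> int set" where
  "Es p K 0 = {0}"
| "Es p K (Suc j) = (\<lambda>(s,k). (s + k) mod p) ` (Es p K j \<times> K)"

definition goodK :: "int \<Rightarrow> int set \<Rightarrow> bool" where
  "goodK p K \<longleftrightarrow> prime p \<and> K \<subseteq> {1..<p} \<and> 1 \<in> K \<and>
     (\<forall>k1\<in>K. \<forall>k2\<in>K. (k1 * k2) mod p \<in> K) \<and> (\<forall>k\<in>K. \<exists>k'\<in>K. (k * k') mod p = 1)"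

lemma goodK_p: "goodK p K \<Longrightarrow> p \<ge> 2"
  unfolding goodK_def using prime_ge_2_int by blast

lemma Es_sub: "goodK p K \<Longrightarrow> Es p K j \<subseteq> {0..<p}"
proof (induction j)
  case 0 then show ?case using goodK_p[OF 0] by simp
next
  case (Suc j)
  have "p > 0" using goodK_p[OF Suc.prems] by simp
  then show ?case by auto
qed

lemma Es_fin: "goodK p K \<Longrightarrow> finite (Es p K j)"
  by (rule finite_subset[OF Es_sub finite_atLeastLessThan_int])

lemma Es_ne: "goodK p K \<Longrightarrow> Es p K j \<noteq> {}"
proof (induction j)
  case 0 then show ?case by simp
next
  case (Suc j)
  have "1 \<in> K" using Suc.prems unfolding goodK_def by blast
  then show ?case using Suc by auto
qed

lemma Es_inv: "goodK p K \<Longrightarrow> k \<in> K \<Longrightarrow> s \<in> Es p K j \<Longrightarrow> (k * s) mod p \<in> Es p K j"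
proof (induction j arbitrary: s)
  case 0 then show ?case by simp
next
  case (Suc j)
  obtain s0 k1 where s: "s = (s0 + k1) mod p" "s0 \<in> Es p K j" "k1 \<in> K" using Suc.prems(3) by auto
  have A: "(k * s0) mod p \<in> Es p K j" using Suc.IH[OF Suc.prems(1,2) s(2)] .
  have B: "(k * k1) mod p \<in> K" using Suc.prems(1,2) s(3) unfolding goodK_def by blast
  have "(k * s) mod p = ((k * s0) mod p + (k * k1) mod p) mod p"
    unfolding s(1) by (simp only: mod_mult_right_eq mod_add_eq distrib_left)
  thus ?case using A B by auto
qed

lemma Es_shift:
  assumes g: "goodK p K" and k: "k \<in> K"
  shows "(\<lambda>s. (s + k) mod p) ` Es p K j \<subseteq> Es p K (Suc j)"
    and "card ((\<lambda>s. (s + k) mod p) ` Es p K j) = card (Es p K j)"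
proof -
  show "(\<lambda>s. (s + k) mod p) ` Es p K j \<subseteq> Es p K (Suc j)" using k by auto
  have "inj_on (\<lambda>s. (s + k) mod p) (Es p K j)"
  proof (rule inj_onI)
    fix x y assume xy: "x \<in> Es p K j" "y \<in> Es p K j" "(x + k) mod p = (y + k) mod p"
    have "[x + k = y + k] (mod p)" using xy(3) by (simp add: cong_def)
    hence "[x = y] (mod p)" by (simp add: cong_add_rcancel)
    moreover have "x \<in> {0..<p}" "y \<in> {0..<p}" using xy(1,2) Es_sub[OF g, of j] by blast+
    ultimately show "x = y" by (simp add: cong_def)
  qed
  thus "card ((\<lambda>s. (s + k) mod p) ` Es p K j) = card (Es p K j)" by (rule card_image)
qed

lemma Es_mono: "goodK p K \<Longrightarrow> card (Es p K j) \<le> card (Es p K (Suc j))"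
proof -
  assume g: "goodK p K"
  have one: "1 \<in> K" using g unfolding goodK_def by blast
  have "card ((\<lambda>s. (s + 1) mod p) ` Es p K j) \<le> card (Es p K (Suc j))"
    by (rule card_mono[OF Es_fin[OF g] Es_shift(1)[OF g one]])
  thus ?thesis using Es_shift(2)[OF g one] by simp
qed

lemma Es_full_persist:
  assumes g: "goodK p K" and f: "Es p K j = {0..<p}"
  shows "Es p K (Suc j) = {0..<p}"
proof -
  have "card (Es p K j) \<le> card (Es p K (Suc j))" by (rule Es_mono[OF g])
  hence "card {0..<p} \<le> card (Es p K (Suc j))" using f by simp
  thus ?thesis by (rule card_seteq[OF finite_atLeastLessThan_int Es_sub[OF g]])
qed

lemma Es_full:
  assumes g: "goodK p K" and k0: "k0 \<in> K" "k0 \<noteq> 1"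
    and eq: "card (Es p K j) = card (Es p K (Suc j))"
  shows "Es p K j = {0..<p}"
proof -
  define A where "A = Es p K j"
  define T where "T k = (\<lambda>s. (s + k) mod p) ` A" for k
  have one: "1 \<in> K" using g unfolding goodK_def by blast
  have TB: "T k = Es p K (Suc j)" if "k \<in> K" for k
  proof -
    have "T k \<subseteq> Es p K (Suc j)" unfolding T_def A_def by (rule Es_shift(1)[OF g that])
    moreover have "card (T k) = card (Es p K (Suc j))"
      unfolding T_def A_def using Es_shift(2)[OF g that] eq by simp
    ultimately show ?thesis using Es_fin[OF g] card_subset_eq by blast
  qed
  have T1: "T 1 = T k0" using TB one k0(1) by simp
  define \<delta> where "\<delta> = k0 - 1"
  have Asub: "A \<subseteq> {0..<p}" unfolding A_def by (rule Es_sub[OF g])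
  have step: "(s + \<delta>) mod p \<in> A" if s: "s \<in> A" for s
  proof -
    have "(s + k0) mod p \<in> T k0" unfolding T_def using s by blast
    hence "(s + k0) mod p \<in> T 1" using T1 by simp
    then obtain s' where s': "s' \<in> A" "(s + k0) mod p = (s' + 1) mod p" unfolding T_def by (rule imageE)
    have "[s' + 1 = s + k0] (mod p)" using s'(2) by (simp add: cong_def)
    hence "[s' + 1 - 1 = s + k0 - 1] (mod p)" by (rule cong_diff) simp
    hence "[s' = s + \<delta>] (mod p)" unfolding \<delta>_def by (simp add: algebra_simps)
    moreover have "s' \<in> {0..<p}" using s'(1) Asub by blast
    ultimately have "s' = (s + \<delta>) mod p" by (simp add: cong_def)
    thus ?thesis using s'(1) by simp
  qed
  have iter: "(s + int n * \<delta>) mod p \<in> A" if s: "s \<in> A" for s n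
  proof (induction n)
    case 0
    have "s mod p = s" using s Asub by auto
    then show ?case using s by simp
  next
    case (Suc n)
    have "((s + int n * \<delta>) mod p + \<delta>) mod p \<in> A" by (rule step[OF Suc])
    moreover have "((s + int n * \<delta>) mod p + \<delta>) mod p = (s + int (Suc n) * \<delta>) mod p"
      by (simp add: mod_add_left_eq algebra_simps mod_add_right_eq)
    ultimately show ?case by simp
  qed
  have k0r: "1 \<le> k0" "k0 < p" using k0(1) g unfolding goodK_def by auto
  have "\<not> p dvd \<delta>"
  proof
    assume "p dvd \<delta>"
    moreover have "0 < \<delta>" "\<delta> < p" using k0r k0(2) unfolding \<delta>_def by auto
    ultimately show False using zdvd_imp_le by fastforce
  qed
  moreover have "prime p" using g unfolding goodK_def by blast
  ultimately have "coprime p \<delta>" using prime_imp_coprime by blast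
  hence "coprime \<delta> p" by (simp add: coprime_commute)
  then obtain w where w: "[\<delta> * w = 1] (mod p)" using cong_solve_coprime_int by blast
  obtain s0 where s0: "s0 \<in> A" using Es_ne[OF g] unfolding A_def by blast
  have "y \<in> A" if y: "y \<in> {0..<p}" for y
  proof -
    have p0: "p > 0" using goodK_p[OF g] by simp
    define n where "n = nat ((w * (y - s0)) mod p)"
    have nn: "int n = (w * (y - s0)) mod p" unfolding n_def using p0 by simp
    have c1: "[s0 + int n * \<delta> = s0 + (w * (y - s0)) * \<delta>] (mod p)"
      unfolding nn by (intro cong_add cong_scalar_right) (simp_all add: cong_def)
    have "[(\<delta> * w) * (y - s0) = 1 * (y - s0)] (mod p)" by (rule cong_scalar_right[OF w])
    hence "[s0 + (\<delta> * w) * (y - s0) = s0 + 1 * (y - s0)] (mod p)" by (intro cong_add) simp_all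
    moreover have "s0 + (\<delta> * w) * (y - s0) = s0 + (w * (y - s0)) * \<delta>" by (simp add: algebra_simps)
    moreover have "s0 + 1 * (y - s0) = y" by simp
    ultimately have c2: "[s0 + (w * (y - s0)) * \<delta> = y] (mod p)" by simp
    have "[s0 + int n * \<delta> = y] (mod p)" by (rule cong_trans[OF c1 c2])
    hence "(s0 + int n * \<delta>) mod p = y" using y by (simp add: cong_def)
    thus ?thesis using iter[OF s0, of n] by simp
  qed
  thus ?thesis using Asub unfolding A_def by blast
qed

lemma goodK_fin: "goodK p K \<Longrightarrow> finite K"
  unfolding goodK_def by (meson finite_atLeastLessThan_int finite_subset)

lemma inv_card_dvd:
  assumes g: "goodK p K"
  shows "finite Z \<Longrightarrow> Z \<subseteq> {1..<p} \<Longrightarrow> (\<forall>k\<in>K. \<forall>z\<in>Z. (k * z) mod p \<in> Z) \<Longrightarrow> card K dvd card Z"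
proof (induction "card Z" arbitrary: Z rule: less_induct)
  case less
  show ?case
  proof (cases "Z = {}")
    case True then show ?thesis by simp
  next
    case False
    then obtain z where z: "z \<in> Z" by blast
    have pp: "prime p" using g unfolding goodK_def by blast
    have Ksub: "K \<subseteq> {1..<p}" using g unfolding goodK_def by blast
    have one: "1 \<in> K" using g unfolding goodK_def by blast
    have Kmul: "\<And>k1 k2. k1 \<in> K \<Longrightarrow> k2 \<in> K \<Longrightarrow> (k1 * k2) mod p \<in> K" using g unfolding goodK_def by blast
    have Kinv: "\<And>k. k \<in> K \<Longrightarrow> \<exists>k'\<in>K. (k * k') mod p = 1" using g unfolding goodK_def by blast
    have finK: "finite K" by (rule goodK_fin[OF g])
    define Orb where "Orb = (\<lambda>k. (z * k) mod p) ` K"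
    have zr: "1 \<le> z" "z < p" using z less.prems(2) by auto
    have "\<not> p dvd z" using zr zdvd_imp_le by fastforce
    hence cz: "coprime z p" using prime_imp_coprime[OF pp] coprime_commute by blast
    have Osub: "Orb \<subseteq> Z"
    proof
      fix x assume "x \<in> Orb"
      then obtain k where k: "k \<in> K" "x = (z * k) mod p" unfolding Orb_def by blast
      have "(k * z) mod p \<in> Z" using less.prems(3) k(1) z by blast
      thus "x \<in> Z" using k(2) by (simp add: mult.commute)
    qed
    have injO: "inj_on (\<lambda>k. (z * k) mod p) K"
    proof (rule inj_onI)
      fix k1 k2 assume k: "k1 \<in> K" "k2 \<in> K" "(z * k1) mod p = (z * k2) mod p"
      have "[z * k1 = z * k2] (mod p)" using k(3) by (simp add: cong_def)
      hence "[k1 = k2] (mod p)" using cong_mult_lcancel[OF cz] by blast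
      moreover have "k1 \<in> {1..<p}" "k2 \<in> {1..<p}" using k(1,2) Ksub by blast+
      ultimately show "k1 = k2" by (simp add: cong_def)
    qed
    have cO: "card Orb = card K" unfolding Orb_def by (rule card_image[OF injO])
    have cK: "card K \<ge> 1" using finK one by (metis One_nat_def Suc_leI card_gt_0_iff empty_iff)
    define Z' where "Z' = Z - Orb"
    have finO: "finite Orb" unfolding Orb_def using finK by simp
    have cZ: "card Z = card Z' + card Orb"
      unfolding Z'_def using card_Diff_subset[OF finO Osub] card_mono[OF less.prems(1) Osub] by simp
    have lt: "card Z' < card Z" using cZ cO cK by simp
    have invZ': "\<forall>k\<in>K. \<forall>y\<in>Z'. (k * y) mod p \<in> Z'"
    proof (intro ballI)
      fix k y assume k: "k \<in> K" and y: "y \<in> Z'"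
      have yZ: "y \<in> Z" and yO: "y \<notin> Orb" using y unfolding Z'_def by auto
      have inZ: "(k * y) mod p \<in> Z" using less.prems(3) k yZ by blast
      have "(k * y) mod p \<notin> Orb"
      proof
        assume "(k * y) mod p \<in> Orb"
        then obtain k1 where k1: "k1 \<in> K" "(k * y) mod p = (z * k1) mod p" unfolding Orb_def by blast
        obtain k' where k': "k' \<in> K" "(k * k') mod p = 1" using Kinv[OF k] by blast
        have c1: "[k * y = z * k1] (mod p)" using k1(2) by (simp add: cong_def)
        have "[k' * (k * y) = k' * (z * k1)] (mod p)" by (rule cong_scalar_left[OF c1])
        moreover have "[k' * (k * y) = y] (mod p)"
        proof -
          have "[k * k' = 1] (mod p)" using k'(2) zr by (simp add: cong_def)
          hence "[(k * k') * y = 1 * y] (mod p)" by (rule cong_scalar_right)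
          thus ?thesis by (simp add: algebra_simps)
        qed
        moreover have "[k' * (z * k1) = z * ((k1 * k') mod p)] (mod p)"
        proof -
          have "[(k1 * k') mod p = k1 * k'] (mod p)" by (simp add: cong_def)
          hence "[z * ((k1 * k') mod p) = z * (k1 * k')] (mod p)" by (rule cong_scalar_left)
          thus ?thesis by (simp add: algebra_simps cong_sym_eq)
        qed
        ultimately have "[y = z * ((k1 * k') mod p)] (mod p)"
          by (meson cong_sym cong_trans)
        moreover have "y \<in> {1..<p}" using yZ less.prems(2) by blast
        ultimately have "y = (z * ((k1 * k') mod p)) mod p" by (simp add: cong_def)
        moreover have "(k1 * k') mod p \<in> K" by (rule Kmul[OF k1(1) k'(1)])
        ultimately have "y \<in> Orb" unfolding Orb_def by blast
        thus False using yO by blast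
      qed
      thus "(k * y) mod p \<in> Z'" using inZ unfolding Z'_def by blast
    qed
    have "card K dvd card Z'"
      by (rule less.hyps[OF lt]) (use less.prems invZ' in \<open>auto simp: Z'_def\<close>)
    thus ?thesis using cZ cO by simp
  qed
qed

lemma Zs_dvd:
  assumes g: "goodK p K"
  shows "card K dvd card (Es p K j - {0})"
proof (rule inv_card_dvd[OF g])
  show "finite (Es p K j - {0})" using Es_fin[OF g] by simp
  show "Es p K j - {0} \<subseteq> {1..<p}" using Es_sub[OF g, of j] by auto
  show "\<forall>k\<in>K. \<forall>z\<in>Es p K j - {0}. k * z mod p \<in> Es p K j - {0}"
  proof (intro ballI)
    fix k z assume k: "k \<in> K" and z: "z \<in> Es p K j - {0}"
    have pp: "prime p" using g unfolding goodK_def by blast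
    have kr: "1 \<le> k" "k < p" using k g unfolding goodK_def by auto
    have zr: "0 \<le> z" "z < p" "z \<noteq> 0" using z Es_sub[OF g, of j] by auto
    have nk: "\<not> p dvd k" using kr zdvd_imp_le by fastforce
    have nz: "\<not> p dvd z" using zr zdvd_imp_le by fastforce
    have "\<not> p dvd k * z" using nk nz pp by (simp add: prime_dvd_mult_iff)
    hence "(k * z) mod p \<noteq> 0" by (simp add: dvd_eq_mod_eq_0)
    moreover have "(k * z) mod p \<in> Es p K j" using Es_inv[OF g k] z by blast
    ultimately show "(k * z) mod p \<in> Es p K j - {0}" by blast
  qed
qed

lemma Es_one: "goodK p K \<Longrightarrow> Es p K (Suc 0) = K"
proof -
  assume g: "goodK p K"
  have Ksub: "K \<subseteq> {1..<p}" using g unfolding goodK_def by blast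
  have "Es p K (Suc 0) = (\<lambda>k. k mod p) ` K" by force
  also have "\<dots> = (\<lambda>k. k) ` K"
    by (rule image_cong[OF refl]) (use Ksub in auto)
  finally show ?thesis by simp
qed

lemma dvd_gap:
  fixes a b c :: nat
  assumes "c dvd a" "c dvd b" "a < b"
  shows "a + c \<le> b"
proof -
  obtain x y where "a = c * x" "b = c * y" using assms(1,2) by (auto elim!: dvdE)
  moreover have "x < y" using assms(3) calculation by (metis mult_less_cancel1)
  ultimately show ?thesis by (metis Suc_leI add.commute mult_Suc_right mult_le_mono2)
qed

lemma card_le_Diff1: "finite A \<Longrightarrow> card A \<le> card (A - {x}) + 1"
proof (cases "x \<in> A")
  case True
  assume "finite A"
  have "card (A - {x}) = card A - 1" using True by (rule card_Diff_singleton)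
  thus ?thesis by linarith
next
  case False
  hence "A - {x} = A" by blast
  thus ?thesis by simp
qed

lemma Es_eventually_full:
  assumes g: "goodK p K" and k0: "k0 \<in> K" "k0 \<noteq> 1"
    and cardK: "int (card K) * int M \<ge> p - 1"
  shows "Es p K (2*M+1) = {0..<p}"
proof -
  define Z where "Z j = Es p K j - {0}" for j
  have full_or: "Es p K (2*t+1) = {0..<p} \<or> card (Z (2*t+1)) \<ge> (t+1) * card K" for t
  proof (induction t)
    case 0
    have "Z 1 = K" unfolding Z_def using Es_one[OF g] g unfolding goodK_def by auto
    then show ?case by simp
  next
    case (Suc t)
    define j where "j = 2*t+1"
    have jj: "2 * Suc t + 1 = Suc (Suc j)" unfolding j_def by simp
    show ?case
    proof (cases "Es p K (Suc (Suc j)) = {0..<p}")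
      case True then show ?thesis unfolding jj by simp
    next
      case nf2: False
      have nf1: "Es p K (Suc j) \<noteq> {0..<p}" using nf2 Es_full_persist[OF g] by blast
      have nf0: "Es p K j \<noteq> {0..<p}" using nf1 Es_full_persist[OF g] by blast
      have ne0: "card (Es p K j) \<noteq> card (Es p K (Suc j))" using Es_full[OF g k0, of j] nf0 by blast
      have m0: "card (Es p K j) < card (Es p K (Suc j))"
        using Es_mono[OF g, of j] ne0 by linarith
      have ne1: "card (Es p K (Suc j)) \<noteq> card (Es p K (Suc (Suc j)))" using Es_full[OF g k0, of "Suc j"] nf1 by blast
      have m1: "card (Es p K (Suc j)) < card (Es p K (Suc (Suc j)))"
        using Es_mono[OF g, of "Suc j"] ne1 by linarith
      have IH: "card (Z j) \<ge> (t+1) * card K" using Suc.IH nf0 unfolding j_def by blast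
      have z1: "card (Z j) \<le> card (Es p K j)" unfolding Z_def
        using Es_fin[OF g] by (simp add: card_mono)
      have z2: "card (Es p K (Suc (Suc j))) \<le> card (Z (Suc (Suc j))) + 1" unfolding Z_def
        using card_le_Diff1[OF Es_fin[OF g]] .
      have lt: "card (Z j) < card (Z (Suc (Suc j)))" using z1 z2 m0 m1 by linarith
      have d1: "card K dvd card (Z j)" unfolding Z_def by (rule Zs_dvd[OF g])
      have d2: "card K dvd card (Z (Suc (Suc j)))" unfolding Z_def by (rule Zs_dvd[OF g])
      have "card (Z j) + card K \<le> card (Z (Suc (Suc j)))"
        by (rule dvd_gap[OF d1 d2 lt])
      hence "card (Z (Suc (Suc j))) \<ge> (Suc t + 1) * card K" using IH by simp
      thus ?thesis unfolding jj by simp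
    qed
  qed
  show ?thesis
  proof (rule ccontr)
    assume nf: "Es p K (2*M+1) \<noteq> {0..<p}"
    hence big: "card (Z (2*M+1)) \<ge> (M+1) * card K" using full_or[of M] by simp
    have "Z (2*M+1) \<subseteq> {1..<p}" unfolding Z_def using Es_sub[OF g, of "2*M+1"] by auto
    hence "card (Z (2*M+1)) \<le> card {1..<p}" by (rule card_mono[OF finite_atLeastLessThan_int])
    also have "card {1..<p} = nat (p - 1)" by simp
    finally have "int (card (Z (2*M+1))) \<le> p - 1" using goodK_p[OF g] by linarith
    moreover have "card K \<ge> 1" using g goodK_fin[OF g] unfolding goodK_def
      by (metis One_nat_def Suc_leI card_gt_0_iff empty_iff)
    moreover have "int ((M+1) * card K) = int (card K) * int M + int (card K)" by (simp add: algebra_simps)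
    ultimately show False using big cardK by linarith
  qed
qed

definition Kset :: "int \<Rightarrow> nat \<Rightarrow> int set" where
  "Kset p M = {x^M mod p | x. \<not> p dvd x}"

lemma Kset_good:
  assumes pp: "prime p"
  shows "goodK p (Kset p M)"
proof -
  have p2: "p \<ge> 2" using pp prime_ge_2_int by blast
  have sub: "Kset p M \<subseteq> {1..<p}"
  proof
    fix k assume "k \<in> Kset p M"
    then obtain x where x: "k = x^M mod p" "\<not> p dvd x" unfolding Kset_def by blast
    have "\<not> p dvd x^M" using x(2) pp prime_dvd_power_int by blast
    hence "x^M mod p \<noteq> 0" by (simp add: dvd_eq_mod_eq_0)
    moreover have "0 \<le> x^M mod p" "x^M mod p < p" using p2 by simp_all
    ultimately show "k \<in> {1..<p}" using x(1) by simp
  qed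
  have one: "1 \<in> Kset p M"
  proof -
    have "\<not> p dvd 1" using p2 by (simp add: zdvd1_eq)
    moreover have "(1::int)^M mod p = 1" using p2 by simp
    ultimately show ?thesis unfolding Kset_def by (metis (mono_tags, lifting) mem_Collect_eq)
  qed
  have mul: "(k1 * k2) mod p \<in> Kset p M" if k1: "k1 \<in> Kset p M" and k2: "k2 \<in> Kset p M" for k1 k2
  proof -
    obtain x where x: "k1 = x^M mod p" "\<not> p dvd x" using k1 unfolding Kset_def by blast
    obtain y where y: "k2 = y^M mod p" "\<not> p dvd y" using k2 unfolding Kset_def by blast
    have "\<not> p dvd x * y" using x(2) y(2) pp by (simp add: prime_dvd_mult_iff)
    moreover have "(k1 * k2) mod p = (x * y)^M mod p"
      unfolding x(1) y(1) by (simp add: power_mult_distrib mod_mult_eq)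
    ultimately show ?thesis unfolding Kset_def by blast
  qed
  have inv: "\<exists>k'\<in>Kset p M. (k * k') mod p = 1" if kK: "k \<in> Kset p M" for k
  proof -
    obtain x where x: "k = x^M mod p" "\<not> p dvd x" using kK unfolding Kset_def by blast
    have "coprime p x" using prime_imp_coprime[OF pp x(2)] .
    hence "coprime x p" by (simp add: coprime_commute)
    then obtain w where w: "[x * w = 1] (mod p)" using cong_solve_coprime_int by blast
    have nw: "\<not> p dvd w"
    proof
      assume "p dvd w"
      hence "p dvd x * w" by simp
      hence "[x * w = 0] (mod p)" by (simp add: cong_0_iff)
      hence "[1 = 0] (mod p)" using w by (meson cong_sym cong_trans)
      thus False using p2 by (simp add: cong_0_iff zdvd1_eq)
    qed
    have "[(x * w)^M = 1^M] (mod p)" by (rule cong_pow[OF w])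
    hence "(x * w)^M mod p = 1" using p2 by (simp add: cong_def)
    hence "(k * (w^M mod p)) mod p = 1" unfolding x(1) by (simp add: power_mult_distrib mod_mult_eq)
    moreover have "w^M mod p \<in> Kset p M" using nw unfolding Kset_def by blast
    ultimately show ?thesis by blast
  qed
  show ?thesis unfolding goodK_def using pp sub one mul inv by blast
qed

lemma Kset_card:
  assumes pp: "prime p" and M: "M \<ge> 1"
  shows "int (card (Kset p M)) * int M \<ge> p - 1"
proof -
  define K where "K = Kset p M"
  have g: "goodK p K" unfolding K_def by (rule Kset_good[OF pp])
  have p2: "p \<ge> 2" using pp prime_ge_2_int by blast
  have finK: "finite K" by (rule goodK_fin[OF g])
  have Ksub: "K \<subseteq> {1..<p}" using g unfolding goodK_def by blast
  define F where "F k = {x \<in> {1..<p}. x^M mod p = k}" for k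
  have cover: "{1..<p} \<subseteq> (\<Union>k\<in>K. F k)"
  proof
    fix x assume x: "x \<in> {1..<p}"
    have "\<not> p dvd x" using x zdvd_imp_le by fastforce
    hence "x^M mod p \<in> K" unfolding K_def Kset_def by blast
    thus "x \<in> (\<Union>k\<in>K. F k)" using x unfolding F_def by blast
  qed
  have Fle: "card (F k) \<le> M" if k: "k \<in> K" for k
  proof -
    define A where "A = {x\<in>{..<nat p}. [x ^ M = nat k] (mod nat p)}"
    have cA: "card A \<le> M" unfolding A_def
      by (rule roots_mod_prime_bound) (use pp M in simp_all)
    have "F k \<subseteq> int ` A"
    proof
      fix x assume x: "x \<in> F k"
      have xr: "1 \<le> x" "x < p" "x^M mod p = k" using x unfolding F_def by auto
      have kr: "0 \<le> k" using k Ksub by auto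
      have "[x^M = k] (mod p)" using xr(3) kr unfolding cong_def by (metis mod_mod_trivial)
      hence "[int (nat x ^ M) = int (nat k)] (mod int (nat p))" using xr kr p2 by simp
      hence "[nat x ^ M = nat k] (mod nat p)" by (simp only: cong_int_iff)
      moreover have "nat x < nat p" using xr by simp
      ultimately have "nat x \<in> A" unfolding A_def by simp
      moreover have "x = int (nat x)" using xr by simp
      ultimately show "x \<in> int ` A" by blast
    qed
    hence "card (F k) \<le> card (int ` A)" by (rule card_mono[rotated]) (simp add: A_def)
    also have "\<dots> \<le> card A" by (rule card_image_le) (simp add: A_def)
    finally show ?thesis using cA by simp
  qed
  have finF: "finite (F k)" for k unfolding F_def by (rule finite_subset[of _ "{1..<p}"]) auto
  have "card {1..<p} \<le> card (\<Union>k\<in>K. F k)"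
    by (rule card_mono[OF _ cover]) (simp add: finK finF)
  also have "\<dots> \<le> (\<Sum>k\<in>K. card (F k))" by (rule card_UN_le[OF finK])
  also have "\<dots> \<le> (\<Sum>k\<in>K. M)" by (rule sum_mono) (rule Fle)
  also have "\<dots> = card K * M" by simp
  finally have "card {1..<p} \<le> card K * M" .
  moreover have "card {1..<p} = nat (p - 1)" by simp
  ultimately have "nat (p - 1) \<le> card K * M" by simp
  hence "int (nat (p - 1)) \<le> int (card K * M)" by linarith
  thus ?thesis unfolding K_def using p2 by simp
qed

lemma Kset_rep:
  assumes pp: "prime p"
  shows "y \<in> Es p (Kset p M) j \<Longrightarrow> \<exists>w::nat\<Rightarrow>int. (\<forall>i<j. \<not> p dvd w i) \<and> [(\<Sum>i<j. w i ^ M) = y] (mod p)"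
proof (induction j arbitrary: y)
  case 0 then show ?case by simp
next
  case (Suc j)
  obtain s k where sk: "y = (s + k) mod p" "s \<in> Es p (Kset p M) j" "k \<in> Kset p M"
    using Suc.prems by auto
  obtain w where w: "\<forall>i<j. \<not> p dvd w i" "[(\<Sum>i<j. w i ^ M) = s] (mod p)"
    using Suc.IH[OF sk(2)] by blast
  obtain x where x: "k = x^M mod p" "\<not> p dvd x" using sk(3) unfolding Kset_def by blast
  define w' where "w' = w(j := x)"
  have s0: "(\<Sum>i<j. w' i ^ M) = (\<Sum>i<j. w i ^ M)" by (rule sum.cong) (simp_all add: w'_def)
  have "(\<Sum>i<Suc j. w' i ^ M) = (\<Sum>i<j. w' i ^ M) + w' j ^ M" by (rule sum.lessThan_Suc)
  hence e: "(\<Sum>i<Suc j. w' i ^ M) = (\<Sum>i<j. w i ^ M) + x ^ M" using s0 by (simp add: w'_def)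
  have "[(\<Sum>i<j. w i ^ M) + x ^ M = s + k] (mod p)"
    by (rule cong_add[OF w(2)]) (simp add: x(1) cong_def)
  moreover have "[s + k = y] (mod p)" unfolding sk(1) by (simp add: cong_def)
  ultimately have "[(\<Sum>i<Suc j. w' i ^ M) = y] (mod p)" unfolding e by (rule cong_trans)
  moreover have "\<forall>i<Suc j. \<not> p dvd w' i" using w(1) x(2) unfolding w'_def by auto
  ultimately show ?case by blast
qed

lemma chain_lemma:
  fixes p y :: int and M j :: nat
  assumes pp: "prime p" and M: "M \<ge> 1" and pM: "p > int M + 1" and j: "j \<ge> 2*M+1"
  shows "\<exists>w::nat\<Rightarrow>int. (\<forall>i<j. \<not> p dvd w i) \<and> [(\<Sum>i<j. w i ^ M) = y] (mod p)"
proof -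
  define K where "K = Kset p M"
  have g: "goodK p K" unfolding K_def by (rule Kset_good[OF pp])
  have cK: "int (card K) * int M \<ge> p - 1" unfolding K_def by (rule Kset_card[OF pp M])
  have one: "1 \<in> K" using g unfolding goodK_def by blast
  have "\<exists>k0\<in>K. k0 \<noteq> 1"
  proof (rule ccontr)
    assume "\<not> (\<exists>k0\<in>K. k0 \<noteq> 1)"
    hence "K \<subseteq> {1}" by blast
    hence "card K \<le> 1" using card_mono[of "{1}" K] by simp
    hence "int (card K) * int M \<le> int M" using M by (simp add: mult_le_cancel_right1)
    thus False using cK pM by linarith
  qed
  then obtain k0 where k0: "k0 \<in> K" "k0 \<noteq> 1" by blast
  have full: "Es p K (2*M+1) = {0..<p}" by (rule Es_eventually_full[OF g k0 cK])
  have fullj: "Es p K j = {0..<p}" using j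
  proof (induction j rule: dec_induct)
    case base then show ?case by (rule full)
  next
    case (step m) then show ?case using Es_full_persist[OF g] by blast
  qed
  have p0: "p > 0" using pM M by simp
  have "y mod p \<in> Es p K j" using fullj p0 by simp
  then obtain w where w: "\<forall>i<j. \<not> p dvd w i" "[(\<Sum>i<j. w i ^ M) = y mod p] (mod p)"
    using Kset_rep[OF pp] unfolding K_def by blast
  have "[(\<Sum>i<j. w i ^ M) = y] (mod p)" using w(2) by (simp add: cong_def)
  thus ?thesis using w(1) by blast
qed




lemma binom_rem:
  fixes x y :: int
  shows "\<exists>Q. (x + y) ^ M = x ^ M + int M * x ^ (M - 1) * y + y^2 * Q"
proof (induction M)
  case 0 then show ?case by (intro exI[of _ 0]) simp
next
  case (Suc M)
  then obtain Q where Q: "(x + y) ^ M = x ^ M + int M * x ^ (M - 1) * y + y^2 * Q" by blast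
  have xm: "x * (int M * x ^ (M - 1)) = int M * x ^ M"
    by (cases M) (simp_all add: algebra_simps)
  have "(x + y) ^ Suc M = (x + y) * (x ^ M + int M * x ^ (M - 1) * y + y^2 * Q)" by (simp add: Q)
  also have "\<dots> = x ^ Suc M + int (Suc M) * x ^ M * y + y^2 * (x * Q + int M * x ^ (M - 1) + y * Q)"
    using xm by (simp add: algebra_simps power2_eq_square)
  finally show ?case by auto
qed

lemma hensel_step:
  fixes p x c M' :: int and M a j :: nat
  assumes pp: "prime p" and Mdec: "int M = p^a * M'" and nM': "\<not> p dvd M'"
    and j: "2*a+1 \<le> j" and nx: "\<not> p dvd x" and cg: "[x^M = c] (mod p^j)"
  shows "\<exists>x'. [x' = x] (mod p) \<and> [x'^M = c] (mod p^(Suc j))"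
proof -
  obtain s where s: "c = x^M + p^j * s" using cg by (auto simp: cong_iff_lin)
  have "coprime p M'" using prime_imp_coprime[OF pp nM'] .
  moreover have "coprime p (x^(M-1))" using prime_imp_coprime[OF pp nx] by simp
  ultimately have "coprime (M' * x^(M-1)) p" by (simp add: coprime_commute)
  then obtain w where w: "[M' * x^(M-1) * w = 1] (mod p)" using cong_solve_coprime_int by blast
  then obtain e where e: "M' * x^(M-1) * w = 1 + p * e"
    using cong_sym[OF w] unfolding cong_iff_lin by blast
  define t where "t = w * s"
  define y where "y = p^(j-a) * t"
  obtain Q where Q: "(x + y) ^ M = x ^ M + int M * x ^ (M - 1) * y + y^2 * Q"
    using binom_rem by blast
  have ja: "a \<le> j" using j by simp
  have pj: "p^a * p^(j-a) = p^j" using ja by (simp add: power_add[symmetric])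
  have "int M * x ^ (M - 1) * y = p^a * p^(j-a) * (M' * x^(M-1) * w) * s"
    unfolding y_def t_def Mdec by (simp add: algebra_simps)
  also have "\<dots> = p^j * s + p^(Suc j) * (e * s)" unfolding pj e by (simp add: algebra_simps)
  finally have T1: "int M * x ^ (M - 1) * y = p^j * s + p^(Suc j) * (e * s)" .
  have ex: "2*(j-a) = Suc j + (2*(j-a) - Suc j)" using j by simp
  have "y^2 = (p^(j-a))^2 * t^2" unfolding y_def by (rule power_mult_distrib)
  also have "(p^(j-a))^2 = p^(2*(j-a))" by (simp only: power_mult[symmetric] mult.commute)
  finally have "y^2 = p^(2*(j-a)) * t^2" .
  also have "\<dots> = p^(Suc j) * (p^(2*(j-a) - Suc j) * t^2)" by (subst ex, simp only: power_add)
  finally have T2: "y^2 * Q = p^(Suc j) * (p^(2*(j-a) - Suc j) * t^2 * Q)" by simp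
  have E2: "(x + y)^M = c + p^(Suc j) * (e * s + p^(2*(j-a) - Suc j) * t^2 * Q)"
    unfolding Q T1 T2 s by (simp add: algebra_simps)
  have "[c = (x+y)^M] (mod p^(Suc j))" unfolding cong_iff_lin using E2 by blast
  hence C2: "[(x+y)^M = c] (mod p^(Suc j))" by (rule cong_sym)
  have ja1: "j - a = Suc (j - a - 1)" using j by simp
  have E1: "x + y = x + p * (p^(j-a-1) * t)" unfolding y_def by (subst ja1) simp
  have "[x = x + y] (mod p)" unfolding cong_iff_lin using E1 by blast
  hence C1: "[x + y = x] (mod p)" by (rule cong_sym)
  show ?thesis using C1 C2 by blast
qed

lemma hensel_lift:
  fixes p x0 c M' :: int and M a k :: nat
  assumes pp: "prime p" and Mdec: "int M = p^a * M'" and nM': "\<not> p dvd M'"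
    and nx: "\<not> p dvd x0" and cg: "[x0^M = c] (mod p^(2*a+1))" and k: "2*a+1 \<le> k"
  shows "\<exists>x. \<not> p dvd x \<and> [x^M = c] (mod p^k)"
  using k
proof (induction k rule: dec_induct)
  case base then show ?case using nx cg by blast
next
  case (step k)
  then obtain x where x: "\<not> p dvd x" "[x^M = c] (mod p^k)" by blast
  obtain x' where x': "[x' = x] (mod p)" "[x'^M = c] (mod p^(Suc k))"
    using hensel_step[OF pp Mdec nM' step.hyps(1) x(1) x(2)] by blast
  have "\<not> p dvd x'" using x(1) x'(1) cong_dvd_iff by blast
  thus ?case using x'(2) by blast
qed

lemma RR_pos: "M \<ge> 1 \<Longrightarrow> M^2 * fact (M+1) \<ge> (1::nat)"
proof -
  assume M: "M \<ge> 1"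
  have "M^2 \<ge> 1" using M by simp
  moreover have "fact (M+1) \<ge> (1::nat)" by (rule fact_ge_1)
  ultimately have "1 * 1 \<le> M^2 * fact (M+1)" by (rule mult_le_mono)
  thus ?thesis by (simp only: mult_1)
qed

lemma RR_ge: "M \<ge> 1 \<Longrightarrow> RR M \<ge> 2*M+1"
proof -
  assume M: "M \<ge> 1"
  hence "M^2 * fact (M+1) * (2*M+2) \<ge> 1 * (2*M+2)" by (intro mult_right_mono RR_pos) simp_all
  moreover obtain X where X: "X = M^2 * fact (M+1) * (2*M+2)" by blast
  ultimately have "X \<ge> 2*M+2" by simp
  moreover have "RR M = X - 1" unfolding RR_def X ..
  ultimately show ?thesis by linarith
qed

lemma RR_dvd:
  fixes p :: int
  assumes pp: "prime p" and M: "M \<ge> 1" and pM: "p \<le> int M + 1"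
  shows "p^(2 * multiplicity p (int M) + 1) dvd int (RR M) + 1"
proof -
  define a where "a = multiplicity p (int M)"
  have pa: "p^a dvd int M" unfolding a_def by (rule multiplicity_dvd)
  have p2: "p \<ge> 2" using pp prime_ge_2_int by blast
  have "nat p dvd fact (M+1)" by (rule dvd_fact) (use p2 pM in auto)
  hence "int (nat p) dvd int (fact (M+1))" by (simp only: int_dvd_int_iff)
  moreover have "int (nat p) = p" using p2 by simp
  ultimately have pf: "p dvd fact (M+1)" by (simp only: of_nat_fact)
  have "p^a * p^a * p dvd int M * int M * fact (M+1)" using pa pf by (intro mult_dvd_mono)
  moreover have "p^(2*a+1) = p^a * p^a * p" by (simp only: mult_2 power_add power_one_right)
  ultimately have "p^(2*a+1) dvd int M * int M * fact (M+1) * (2 * int M + 2)"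
    by (simp only: dvd_mult2)
  moreover have "int (RR M) + 1 = int M * int M * fact (M+1) * (2 * int M + 2)"
  proof -
    have "1 * 1 \<le> M^2 * fact (M+1) * (2*M+2)" using RR_pos[OF M] by (rule mult_le_mono) simp
    moreover obtain X where X: "X = M^2 * fact (M+1) * (2*M+2)" by blast
    ultimately have "X \<ge> 1" by simp
    hence "int (RR M) + 1 = int X" unfolding RR_def X[symmetric] by linarith
    hence "int (RR M) + 1 = int (M^2 * fact (M+1) * (2*M+2))" unfolding X .
    also have "\<dots> = int M * int M * fact (M+1) * (2 * int M + 2)"
      by (simp only: of_nat_mult of_nat_fact power2_eq_square) simp
    finally show ?thesis .
  qed
  ultimately show ?thesis unfolding a_def by (simp only:)
qed

lemma local_waring:
  fixes p :: int and M k :: nat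
  assumes pp: "prime p" and M: "M \<ge> 1"
  shows "\<exists>u::nat\<Rightarrow>int. (\<forall>i<RR M. \<not> p dvd u i) \<and> [(\<Sum>i<RR M. u i ^ M) = -1] (mod p^k)"
proof -
  define R where "R = RR M"
  define a where "a = multiplicity p (int M)"
  define M' where "M' = int M div p^a"
  have p2: "p \<ge> 2" using pp prime_ge_2_int by blast
  have Mdec: "int M = p^a * M'" unfolding M'_def a_def using multiplicity_dvd[of p "int M"] by simp
  have nM': "\<not> p dvd M'" unfolding M'_def a_def
    by (rule multiplicity_decompose) (use M p2 in auto)
  have base: "\<exists>w::nat\<Rightarrow>int. (\<forall>i<R. \<not> p dvd w i) \<and> [(\<Sum>i<R. w i ^ M) = -1] (mod p^(2*a+1))"
  proof (cases "p \<le> int M + 1")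
    case True
    have "p^(2*a+1) dvd int R + 1" unfolding R_def a_def by (rule RR_dvd[OF pp M True])
    hence "[int R = -1] (mod p^(2*a+1))" by (simp add: cong_iff_dvd_diff)
    thus ?thesis using p2 by (intro exI[of _ "\<lambda>i. 1"]) (auto simp: zdvd1_eq)
  next
    case False
    have "\<not> p dvd int M"
    proof
      assume "p dvd int M"
      hence "p \<le> int M" using M by (simp add: zdvd_imp_le)
      thus False using False by simp
    qed
    hence "a = 0" unfolding a_def by (simp add: not_dvd_imp_multiplicity_0)
    moreover have "R \<ge> 2*M+1" unfolding R_def using RR_ge[OF M] .
    ultimately show ?thesis using chain_lemma[OF pp M _ _, of R "-1"] False by simp
  qed
  then obtain w where wnd: "\<forall>i<R. \<not> p dvd w i" and wsum: "[(\<Sum>i<R. w i ^ M) = -1] (mod p^(2*a+1))"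
    by blast
  show ?thesis
  proof (cases "k \<le> 2*a+1")
    case True
    have "p^k dvd p^(2*a+1)" using True by (rule le_imp_power_dvd)
    hence "[(\<Sum>i<R. w i ^ M) = -1] (mod p^k)" using wsum cong_dvd_modulus by blast
    thus ?thesis using wnd unfolding R_def by blast
  next
    case False
    have "R \<ge> 1" unfolding R_def using RR_ge[OF M] by simp
    then obtain R0 where R0: "R = Suc R0" by (cases R) auto
    define c where "c = -1 - (\<Sum>i<R0. w i ^ M)"
    have "[(\<Sum>i<R0. w i ^ M) + w R0 ^ M = -1] (mod p^(2*a+1))" using wsum R0 by simp
    hence "[(\<Sum>i<R0. w i ^ M) + w R0 ^ M - (\<Sum>i<R0. w i ^ M) = -1 - (\<Sum>i<R0. w i ^ M)] (mod p^(2*a+1))"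
      by (rule cong_diff) simp
    hence cg: "[w R0 ^ M = c] (mod p^(2*a+1))" unfolding c_def by simp
    have nw: "\<not> p dvd w R0" using wnd R0 by simp
    have kk: "2*a+1 \<le> k" using False by simp
    obtain x where x: "\<not> p dvd x" "[x^M = c] (mod p^k)"
      using hensel_lift[OF pp Mdec nM' nw cg kk] by blast
    define u where "u = w(R0 := x)"
    have s0: "(\<Sum>i<R0. u i ^ M) = (\<Sum>i<R0. w i ^ M)"
      by (rule sum.cong) (simp_all add: u_def)
    have "(\<Sum>i<R. u i ^ M) = (\<Sum>i<R0. u i ^ M) + u R0 ^ M" unfolding R0 by (rule sum.lessThan_Suc)
    hence "(\<Sum>i<R. u i ^ M) = (\<Sum>i<R0. w i ^ M) + x ^ M" using s0 by (simp add: u_def)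
    moreover have "[(\<Sum>i<R0. w i ^ M) + x ^ M = (\<Sum>i<R0. w i ^ M) + c] (mod p^k)"
      by (rule cong_add) (simp_all add: x(2))
    ultimately have "[(\<Sum>i<R. u i ^ M) = -1] (mod p^k)" unfolding c_def by simp
    moreover have "\<forall>i<R. \<not> p dvd u i" using wnd x(1) unfolding u_def R0 by auto
    ultimately show ?thesis unfolding R_def by blast
  qed
qed




lemma waring_units:
  fixes M :: nat and d :: int
  assumes "M \<ge> 1" "d \<ge> 1"
  shows "\<exists>u::nat\<Rightarrow>int. (\<forall>i<RR M. coprime (u i) d) \<and> [(\<Sum>i<RR M. u i ^ M) = -1] (mod d)"
  using assms(2)
proof (induction "nat d" arbitrary: d rule: less_induct)
  case less
  show ?case
  proof (cases "d = 1")
    case True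
    show ?thesis by (rule exI[of _ "\<lambda>i. 1"]) (simp add: True)
  next
    case False
    with less.prems have d1: "d > 1" by simp
    have "d \<noteq> 0" "\<not> is_unit d" using d1 by auto
    then obtain p where pd: "p dvd d" and pp: "prime p"
      using prime_divisor_exists by blast
    define k where "k = multiplicity p d"
    define q where "q = p ^ k"
    define d' where "d' = d div q"
    have qd: "q dvd d" unfolding q_def k_def by (rule multiplicity_dvd)
    have dq: "d = q * d'" unfolding d'_def using qd by simp
    have nd: "\<not> p dvd d'" unfolding d'_def q_def k_def
      by (rule multiplicity_decompose) (use d1 prime_ge_2_int[OF pp] in auto)
    have kpos: "k > 0" unfolding k_def using pd d1 pp prime_multiplicity_gt_zero_iff[of p d]
      by (auto simp: prime_imp_prime_elem)
    have p2: "p \<ge> 2" using pp prime_ge_2_int by blast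
    have "p^1 \<le> p^k" by (rule power_increasing) (use kpos p2 in auto)
    hence qp: "q \<ge> p" unfolding q_def by simp
    have "0 < q * d'" using dq d1 by simp
    hence d'pos: "d' > 0" using qp p2 by (simp add: zero_less_mult_iff)
    have "d' < d" using dq d'pos qp p2 by (simp add: mult_less_cancel_right)
    hence lt: "nat d' < nat d" using d'pos by simp
    obtain v where vcop: "\<forall>i<RR M. coprime (v i) d'" and vsum: "[(\<Sum>i<RR M. v i ^ M) = -1] (mod d')"
      using less.hyps[OF lt] d'pos by auto
    obtain w where wnd: "\<forall>i<RR M. \<not> p dvd w i" and wsum: "[(\<Sum>i<RR M. w i ^ M) = -1] (mod q)"
      using local_waring[OF pp assms(1), of k] unfolding q_def by auto
    have cop: "coprime q d'" unfolding q_def using prime_imp_coprime[OF pp nd] by simp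
    have "\<forall>i. \<exists>x. [x = w i] (mod q) \<and> [x = v i] (mod d')"
      using binary_chinese_remainder_int[OF cop] by blast
    then obtain u where u: "\<And>i. [u i = w i] (mod q) \<and> [u i = v i] (mod d')" by metis
    have ucop: "coprime (u i) d" if "i < RR M" for i
    proof -
      have "\<not> p dvd u i"
      proof
        assume "p dvd u i"
        moreover have "[u i = w i] (mod p)" using u[of i] cong_dvd_modulus kpos unfolding q_def
          by (metis dvd_power gr_implies_not0)
        ultimately have "p dvd w i" using cong_dvd_iff by blast
        thus False using wnd that by blast
      qed
      hence "coprime (u i) p" using prime_imp_coprime[OF pp] coprime_commute by blast
      hence c1: "coprime (u i) q" unfolding q_def by simp
      have "coprime (v i) d'" using vcop that by blast
      hence c2: "coprime (u i) d'" using u[of i] cong_imp_coprime cong_sym by blast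
      show ?thesis unfolding dq using c1 c2 by simp
    qed
    have s1: "[(\<Sum>i<RR M. u i ^ M) = -1] (mod q)"
    proof -
      have "[(\<Sum>i<RR M. u i ^ M) = (\<Sum>i<RR M. w i ^ M)] (mod q)"
        by (rule cong_sum) (use u in \<open>blast intro: cong_pow\<close>)
      thus ?thesis using wsum cong_trans by blast
    qed
    have s2: "[(\<Sum>i<RR M. u i ^ M) = -1] (mod d')"
    proof -
      have "[(\<Sum>i<RR M. u i ^ M) = (\<Sum>i<RR M. v i ^ M)] (mod d')"
        by (rule cong_sum) (use u in \<open>blast intro: cong_pow\<close>)
      thus ?thesis using vsum cong_trans by blast
    qed
    have "[(\<Sum>i<RR M. u i ^ M) = -1] (mod d)" unfolding dq by (rule coprime_cong_mult[OF s1 s2 cop])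
    thus ?thesis using ucop by blast
  qed
qed



lemma subgroup_pow_mem:
  fixes G (structure)
  assumes "group G" "subgroup H G" "x \<in> H"
  shows "x [^] (c::nat) \<in> H"
proof (induction c)
  case 0 then show ?case using assms by (simp add: subgroup.one_closed)
next
  case (Suc c)
  then show ?case using Suc assms by (simp add: monoid.nat_pow_Suc group.is_monoid subgroup.m_closed)
qed

lemma pow_in_subgroup:
  fixes G (structure)
  assumes "comm_group G" "finite (carrier G)" "subgroup H G" "card (rcosets H) \<le> n"
    and "g \<in> carrier G"
  shows "g [^] (fact n :: nat) \<in> H"
proof -
  interpret comm_group G by fact
  interpret N: normal H G using subgroup_imp_normal assms(3) by blast
  interpret Q: group "G Mod H" by (rule N.factorgroup_is_group)
  have Hc: "H #> g \<in> carrier (G Mod H)" using assms(5) by (auto simp: FactGroup_def RCOSETS_def)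
  have oq: "order (G Mod H) = card (rcosets H)" by (simp add: order_def FactGroup_def)
  have "(H #> g) [^]\<^bsub>G Mod H\<^esub> order (G Mod H) = H"
    using Q.pow_order_eq_1[OF Hc] by simp
  hence "H #> (g [^] order (G Mod H)) = H" using N.FactGroup_pow[OF assms(5)] by simp
  moreover have "g [^] order (G Mod H) \<in> H #> (g [^] order (G Mod H))"
    by (rule rcos_self) (simp_all add: assms)
  ultimately have gin: "g [^] order (G Mod H) \<in> H" by simp
  have "finite (rcosets H)" using assms(2) by (simp add: RCOSETS_def)
  moreover have "rcosets H \<noteq> {}" using Hc by (auto simp: FactGroup_def)
  ultimately have pos: "order (G Mod H) > 0" using oq by (simp add: card_gt_0_iff)
  have "order (G Mod H) dvd fact n" by (rule dvd_fact) (use pos oq assms(4) in auto)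
  then obtain c where c: "fact n = order (G Mod H) * c" by blast
  have e: "g [^] (fact n :: nat) = (g [^] order (G Mod H)) [^] c"
    by (simp only: c nat_pow_pow[OF assms(5)])
  have "(g [^] order (G Mod H)) [^] c \<in> H" by (rule subgroup_pow_mem[OF is_group assms(3) gin])
  thus ?thesis unfolding e .
qed



lemma frac_add_le: "frac (x + y) \<le> frac x + frac (y::real)"
  by (simp add: frac_add)

lemma frac_sum_le:
  fixes f :: "nat \<Rightarrow> real"
  shows "frac (\<Sum>i<r. f i) \<le> (\<Sum>i<r. frac (f i))"
proof (induction r)
  case 0 then show ?case by simp
next
  case (Suc r)
  have "frac (\<Sum>i<Suc r. f i) = frac ((\<Sum>i<r. f i) + f r)" by simp
  also have "\<dots> \<le> frac (\<Sum>i<r. f i) + frac (f r)" by (rule frac_add_le)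
  also have "\<dots> \<le> (\<Sum>i<r. frac (f i)) + frac (f r)" using Suc by simp
  finally show ?case by simp
qed

lemma frac_mod_shift:
  fixes x a d :: int
  assumes "d \<noteq> 0"
  shows "frac (real_of_int ((x mod d) * a) / real_of_int d) = frac (real_of_int (x * a) / real_of_int d)"
proof -
  have e: "x = d * (x div d) + x mod d" by simp
  have "real_of_int x = real_of_int d * real_of_int (x div d) + real_of_int (x mod d)"
    by (subst e) (simp only: of_int_add of_int_mult)
  hence eq: "real_of_int ((x mod d) * a) / real_of_int d = real_of_int (x * a) / real_of_int d + of_int (- (x div d) * a)"
    using assms by (simp add: field_simps)
  show ?thesis unfolding eq by (rule frac_add_of_int_right)
qed

lemma not_int_div:
  fixes t a d :: int
  assumes "d \<ge> 2" "coprime t d" "a mod d \<noteq> 0"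
  shows "real_of_int (t * a) / real_of_int d \<notin> \<int>"
proof
  assume "real_of_int (t * a) / real_of_int d \<in> \<int>"
  then obtain k where k: "real_of_int (t * a) / real_of_int d = of_int k" by (auto elim: Ints_cases)
  hence "real_of_int (t * a) = of_int k * of_int d" using assms(1) by (simp add: field_simps)
  hence "t * a = k * d" by (metis of_int_eq_iff of_int_mult)
  hence "d dvd t * a" by simp
  hence "d dvd a" using assms(2) by (metis coprime_commute coprime_dvd_mult_right_iff)
  thus False using assms(3) by simp
qed

theorem corollary2p7:
  fixes n :: nat
  assumes "n > 0"
  shows "\<exists>\<delta>::real. \<delta> > 0 \<and>
    (\<forall>(d::int) (a::int) (H::int set).
       d \<ge> 2 \<longrightarrow> a mod d \<noteq> 0 \<longrightarrow>
       subgroup H (unit_group_mod d) \<longrightarrow>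
       card (rcosets\<^bsub>unit_group_mod d\<^esub> H) \<le> n \<longrightarrow>
       (1 / real (card H)) * (\<Sum>t\<in>H. frac (real_of_int (t * a) / real_of_int d)) > \<delta>)"
proof -
  define M where "M = (fact n :: nat)"
  have M1: "M \<ge> 1" unfolding M_def by simp
  define r where "r = RR M"
  have main: "(1 / real (card H)) * (\<Sum>t\<in>H. frac (real_of_int (t * a) / real_of_int d)) > 1 / (real r + 2)"
    if d2: "d \<ge> 2" and amod: "a mod d \<noteq> 0" and sg: "subgroup H (unit_group_mod d)"
      and idx: "card (rcosets\<^bsub>unit_group_mod d\<^esub> H) \<le> n" for d a H
  proof -
    define R where "R = residue_ring d"
    define G where "G = unit_group_mod d"
    interpret residues d R by unfold_locales (use d2 in \<open>simp_all add: R_def\<close>)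
    have GR: "G = units_of R" by (simp add: G_def unit_group_mod_def R_def)
    have cG: "comm_group G" unfolding GR by (rule units_comm_group)
    have carG: "carrier G = Units R" unfolding GR by (simp add: units_of_carrier)
    have finG: "finite (carrier G)" unfolding carG by simp
    have multG: "x \<otimes>\<^bsub>G\<^esub> y = (x * y) mod d" for x y
      unfolding GR by (simp add: units_of_mult res_mult_eq)
    have sgG: "subgroup H G" using sg by (simp add: G_def)
    have idxG: "card (rcosets\<^bsub>G\<^esub> H) \<le> n" using idx by (simp add: G_def)
    have Hsub: "H \<subseteq> carrier G" using sgG subgroup.subset by blast
    have Hcop: "0 < t \<and> t < d \<and> coprime t d" if "t \<in> H" for t
      using that Hsub carG res_units_eq by auto
    have finH: "finite H" using Hsub finG finite_subset by blast
    have oneH: "\<one>\<^bsub>G\<^esub> \<in> H" using sgG subgroup.one_closed by blast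
    have cardH: "card H > 0" using finH oneH card_gt_0_iff by blast
    obtain u where ucop: "\<forall>i<r. coprime (u i) d" and usum: "[(\<Sum>i<r. u i ^ M) = -1] (mod d)"
      using waring_units[OF M1, of d] d2 unfolding r_def by auto
    define h where "h i = u i ^ M mod d" for i
    have hH: "h i \<in> H" if "i < r" for i
    proof -
      have um: "u i mod d \<in> Units R" using ucop that d2 by simp
      have "(u i mod d) [^]\<^bsub>G\<^esub> M \<in> H"
        unfolding M_def by (rule pow_in_subgroup[OF cG finG sgG idxG]) (use um carG in simp)
      moreover have "(u i mod d) [^]\<^bsub>G\<^esub> M = (u i mod d) [^]\<^bsub>R\<^esub> M"
        unfolding GR by (rule units_of_pow[OF um])
      moreover have "(u i mod d) [^]\<^bsub>R\<^esub> M = h i" unfolding h_def by (rule pow_cong)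
      ultimately show ?thesis by simp
    qed
    have hsum: "[(\<Sum>i<r. h i) = -1] (mod d)"
    proof -
      have "[(\<Sum>i<r. h i) = (\<Sum>i<r. u i ^ M)] (mod d)"
        unfolding h_def by (rule cong_sum) (simp add: cong_def)
      thus ?thesis using usum cong_trans by blast
    qed
    then obtain k where "-1 = (\<Sum>i<r. h i) + d * k" by (auto simp: cong_iff_lin)
    then obtain q where q: "(\<Sum>i<r. h i) = -1 + d * q" by (intro that[of "-k"]) (simp add: algebra_simps)
    define F where "F t = frac (real_of_int (t * a) / real_of_int d)" for t
    have claim1: "(\<Sum>i<r. F (h i \<otimes>\<^bsub>G\<^esub> t)) \<ge> 1 - F t" if tH: "t \<in> H" for t
    proof -
      have "(\<Sum>i<r. F (h i \<otimes>\<^bsub>G\<^esub> t)) = (\<Sum>i<r. frac (real_of_int (h i * t * a) / real_of_int d))"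
        using d2 by (intro sum.cong refl) (simp only: F_def multG frac_mod_shift)
      also have "\<dots> \<ge> frac (\<Sum>i<r. real_of_int (h i * t * a) / real_of_int d)"
        by (rule frac_sum_le)
      finally have A: "(\<Sum>i<r. F (h i \<otimes>\<^bsub>G\<^esub> t)) \<ge> frac (\<Sum>i<r. real_of_int (h i * t * a) / real_of_int d)" .
      have "(\<Sum>i<r. real_of_int (h i * t * a) / real_of_int d)
            = real_of_int ((\<Sum>i<r. h i) * t * a) / real_of_int d"
        by (simp add: sum_divide_distrib [symmetric] sum_distrib_right)
      also have "\<dots> = - (real_of_int (t * a) / real_of_int d) + of_int (q * t * a)"
        unfolding q using d2 by (simp add: field_simps)
      finally have E: "(\<Sum>i<r. real_of_int (h i * t * a) / real_of_int d) = - (real_of_int (t * a) / real_of_int d) + of_int (q * t * a)" .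
      have "frac (\<Sum>i<r. real_of_int (h i * t * a) / real_of_int d) = frac (- (real_of_int (t * a) / real_of_int d))"
        unfolding E by (rule frac_add_of_int_right)
      also have "\<dots> = 1 - F t"
        unfolding F_def frac_neg using not_int_div[OF d2 _ amod, of t] Hcop[OF tH] by simp
      finally show ?thesis using A by simp
    qed
    have claim2: "(\<Sum>t\<in>H. F (h i \<otimes>\<^bsub>G\<^esub> t)) = (\<Sum>t\<in>H. F t)" if "i < r" for i
    proof -
      interpret GG: group G using cG comm_group.axioms(2) by auto
      have hi: "h i \<in> H" using hH that .
      have hic: "h i \<in> carrier G" using hi Hsub by auto
      have "bij_betw (\<lambda>t. h i \<otimes>\<^bsub>G\<^esub> t) H H"
      proof (rule bij_betw_imageI)
        show "inj_on (\<lambda>t. h i \<otimes>\<^bsub>G\<^esub> t) H"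
        proof (rule inj_onI)
          fix x y assume xy: "x \<in> H" "y \<in> H" "h i \<otimes>\<^bsub>G\<^esub> x = h i \<otimes>\<^bsub>G\<^esub> y"
          have U: "h i \<in> Units G" "x \<in> carrier G" "y \<in> carrier G"
            using hic xy(1,2) Hsub GG.Units_eq by auto
          show "x = y" using xy(3) GG.Units_l_cancel[OF U] by simp
        qed
        show "(\<lambda>t. h i \<otimes>\<^bsub>G\<^esub> t) ` H = H"
        proof
          show "(\<lambda>t. h i \<otimes>\<^bsub>G\<^esub> t) ` H \<subseteq> H" using hi sgG subgroup.m_closed by fastforce
          show "H \<subseteq> (\<lambda>t. h i \<otimes>\<^bsub>G\<^esub> t) ` H"
          proof
            fix y assume y: "y \<in> H"
            have yc: "y \<in> carrier G" using y Hsub by auto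
            have "inv\<^bsub>G\<^esub> h i \<otimes>\<^bsub>G\<^esub> y \<in> H"
              using sgG hi y subgroup.m_closed subgroup.m_inv_closed by metis
            moreover have "h i \<otimes>\<^bsub>G\<^esub> (inv\<^bsub>G\<^esub> h i \<otimes>\<^bsub>G\<^esub> y) = y"
              using hic yc by (simp add: GG.m_assoc[symmetric])
            ultimately show "y \<in> (\<lambda>t. h i \<otimes>\<^bsub>G\<^esub> t) ` H" by (metis image_eqI)
          qed
        qed
      qed
      thus ?thesis by (rule sum.reindex_bij_betw)
    qed
    define S where "S = (\<Sum>t\<in>H. F t)"
    have "(\<Sum>t\<in>H. (1 - F t)) \<le> (\<Sum>t\<in>H. \<Sum>i<r. F (h i \<otimes>\<^bsub>G\<^esub> t))"
      by (rule sum_mono) (rule claim1)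
    also have "\<dots> = (\<Sum>i<r. \<Sum>t\<in>H. F (h i \<otimes>\<^bsub>G\<^esub> t))" by (rule sum.swap)
    also have "\<dots> = (\<Sum>i<r. S)" unfolding S_def by (rule sum.cong) (simp_all add: claim2)
    finally have "real (card H) - S \<le> real r * S"
      by (simp add: sum_subtractf S_def)
    hence "real (card H) \<le> (real r + 1) * S" by (simp add: algebra_simps)
    hence "S \<ge> real (card H) / (real r + 1)" by (simp add: field_simps)
    hence "(1 / real (card H)) * S \<ge> 1 / (real r + 1)" using cardH by (simp add: field_simps)
    moreover have "1 / (real r + 1) > 1 / (real r + 2)" by (simp add: frac_less2 divide_strict_left_mono)
    ultimately show ?thesis unfolding S_def F_def by linarith
  qed
  show ?thesis
    by (rule exI[of _ "1 / (real r + 2)"]) (use main in auto)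
qed

end
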